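(* Let $p$ be a prime and let $n=p^{\beta}(pq+r)$ with $\beta,q,r\in\mathbb{N}$ and $\{-q\}_{p-1}<r<p$. Then $$\operatorname{ord}_p(n!)=\Big\lfloor\frac{n-1}{p-1}\Big\rfloor\iff q=0.$$
   Context: $\{a\}_{m}$ denotes the least nonnegative residue of the integer $a$ modulo the positive integer $m$. $\operatorname{ord}_p$ is the $p$-adic order. *)

theory Defs
  imports "HOL-Computational_Algebra.Computational_Algebra"
begin

end

theory Submission
  imports Defs
begin

function lf :: "nat \<Rightarrow> nat \<Rightarrow> nat" where
  "lf p n = (if p \<le> 1 \<or> n = 0 then 0 else n div p + lf p (n div p))"
  by auto
termination by (relation "measure (\<lambda>(p,n). n)") auto

function ds :: "nat \<Rightarrow> nat \<Rightarrow> nat" where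
  "ds p n = (if p \<le> 1 \<or> n = 0 then 0 else n mod p + ds p (n div p))"
  by auto
termination by (relation "measure (\<lambda>(p,n). n)") auto

declare lf.simps[simp del] ds.simps[simp del]

lemma lf_eq: "p > 1 \<Longrightarrow> lf p n = n div p + lf p (n div p)"
  by (cases "n = 0") (simp_all add: lf.simps[of p n] lf.simps[of p 0])

lemma ds_eq: "p > 1 \<Longrightarrow> ds p n = n mod p + ds p (n div p)"
  by (cases "n = 0") (simp_all add: ds.simps[of p n] ds.simps[of p 0])

lemma lf_Suc:
  assumes p: "prime p"
  shows "lf p (Suc n) = multiplicity p (Suc n) + lf p n"
  using assms
proof (induction n rule: less_induct)
  case (less n)
  have p1: "p > 1" using p prime_gt_1_nat by blast
  show ?case
  proof (cases "p dvd Suc n")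
    case False
    have "Suc n div p = n div p"
      using False p1 by (simp add: div_Suc dvd_eq_mod_eq_0)
    then show ?thesis using False lf_eq[OF p1, of n] lf_eq[OF p1, of "Suc n"]
      by (simp add: not_dvd_imp_multiplicity_0)
  next
    case True
    then obtain k where k: "Suc n = p * k" by blast
    then have "k \<noteq> 0" by (cases k) auto
    then obtain m where m: "k = Suc m" using not0_implies_Suc by blast
    have "p * Suc m \<ge> 2 * Suc m" using p1 by (intro mult_right_mono) auto
    then have "Suc n \<ge> 2 * m + 2" using k m by simp
    then have mn: "m < n" by linarith
    have d1: "Suc n div p = Suc m" using k m p1 by simp
    have "n = (p - 1) + p * m" using k m p1 by (simp add: algebra_simps)
    then have "n div p = m + (p - 1) div p" using p1 by (metis div_mult_self2 not_one_less_zero zero_less_iff_neq_zero less_imp_neq not_less_zero)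
    then have d2: "n div p = m" using p1 by simp
    have mul: "multiplicity p (Suc n) = Suc (multiplicity p (Suc m))"
    proof -
      have mt: "multiplicity p (p * k) = Suc (multiplicity p k)"
        using p1 m by (intro multiplicity_times_same) auto
      then show ?thesis using k m by metis
    qed
    have "lf p (Suc n) = Suc m + lf p (Suc m)" using lf_eq[OF p1, of "Suc n"] d1 by simp
    also have "\<dots> = Suc m + multiplicity p (Suc m) + lf p m" using less.IH[OF mn p] by simp
    also have "lf p n = m + lf p m" using lf_eq[OF p1, of n] d2 by simp
    ultimately show ?thesis using mul by simp
  qed
qed

lemma mult_fact:
  assumes p: "prime p"
  shows "multiplicity p (fact n) = lf p n"
proof (induction n)
  case 0
  then show ?case using p by (simp add: lf.simps)
next
  case (Suc n)
  have "multiplicity p (fact (Suc n) :: nat) = multiplicity p (Suc n * fact n)"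
    by (simp add: fact_Suc)
  also have "\<dots> = multiplicity p (Suc n) + multiplicity p (fact n :: nat)"
    using p by (intro prime_elem_multiplicity_mult_distrib) auto
  finally show ?case using Suc lf_Suc[OF p, of n] by simp
qed

lemma lf_ds:
  assumes "p > 1" shows "(p - 1) * lf p n + ds p n = n"
proof (induction n rule: less_induct)
  case (less n)
  show ?case
  proof (cases "n = 0")
    case True then show ?thesis by (simp add: lf.simps ds.simps)
  next
    case False
    have "n div p < n" using False assms by simp
    note IH = less.IH[OF this]
    have "(p - 1) * lf p n + ds p n = (p - 1) * (n div p) + n mod p + ((p - 1) * lf p (n div p) + ds p (n div p))"
      using lf_eq[OF assms, of n] ds_eq[OF assms, of n] by (simp add: algebra_simps)
    also have "\<dots> = (p - 1) * (n div p) + n mod p + n div p" using IH by simp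
    also have "\<dots> = p * (n div p) + n mod p" using assms by (simp add: algebra_simps)
    also have "\<dots> = n" by simp
    finally show ?thesis .
  qed
qed

lemma ds_times_p: "p > 1 \<Longrightarrow> ds p (p * m) = ds p m"
  using ds_eq[of p "p*m"] by simp

lemma ds_pow: "p > 1 \<Longrightarrow> ds p (p ^ b * m) = ds p m"
  by (induction b) (simp_all add: ds_times_p mult.assoc)

lemma ds_lin: "p > 1 \<Longrightarrow> r < p \<Longrightarrow> ds p (p * q + r) = r + ds p q"
  using ds_eq[of p "p*q+r"] by simp

lemma ds_pos: "p > 1 \<Longrightarrow> n > 0 \<Longrightarrow> ds p n \<ge> 1"
proof (induction n rule: less_induct)
  case (less n)
  show ?case
  proof (cases "n mod p = 0")
    case True
    then have "n div p > 0" "n div p < n" using less.prems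
      by (auto simp: div_greater_zero_iff dest: mod_less) 
    then show ?thesis using less.IH[of "n div p"] less.prems ds_eq[of p n] by simp
  next
    case False then show ?thesis using ds_eq[of p n] less.prems by simp
  qed
qed

theorem lemma4p1:
  fixes p \<beta> q r n :: nat
  assumes "prime p"
    and "n = p ^ \<beta> * (p * q + r)"
    and "(- int q) mod (int p - 1) < int r"
    and "r < p"
  shows "multiplicity p (fact n) = (n - 1) div (p - 1) \<longleftrightarrow> q = 0"
proof -
  have p1: "p > 1" using assms(1) prime_gt_1_nat by blast
  have "(- int q) mod (int p - 1) \<ge> 0" using p1 by simp
  then have r1: "r \<ge> 1" using assms(3) by linarith
  have v: "multiplicity p (fact n) = lf p n" using mult_fact[OF assms(1)] .
  have s: "ds p n = r + ds p q" using assms(2) ds_pow[OF p1] ds_lin[OF p1 assms(4)] by simp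
  have e: "(p - 1) * lf p n + ds p n = n" using lf_ds[OF p1] .
  have spos: "ds p n \<ge> 1" using s r1 by simp
  have "(n - 1) div (p - 1) = ((p - 1) * lf p n + (ds p n - 1)) div (p - 1)"
    using e spos by (metis add_diff_assoc)
  also have "\<dots> = lf p n + (ds p n - 1) div (p - 1)" using p1 by simp
  moreover have "(ds p n - 1) div (p - 1) = 0 \<longleftrightarrow> ds p n - 1 < p - 1"
    using p1 by (simp add: div_eq_0_iff)
  ultimately have K: "multiplicity p (fact n) = (n - 1) div (p - 1) \<longleftrightarrow> ds p n \<le> p - 1"
    using v p1 spos by auto
  show ?thesis
  proof (cases "q = 0")
    case True
    then show ?thesis using K s assms(4) by (simp add: ds.simps[of p 0])
  next
    case False
    define d where "d = ds p q"
    have d1: "d \<ge> 1" using ds_pos[OF p1] False d_def by simp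
    have eq: "(p - 1) * lf p q + d = q" using lf_ds[OF p1] d_def by simp
    have "r + d > p - 1"
    proof (rule ccontr)
      assume "\<not> r + d > p - 1"
      then have le: "r + d \<le> p - 1" by simp
      have iq: "int q = (int p - 1) * int (lf p q) + int d"
        using eq p1 by (metis of_nat_1 of_nat_add of_nat_diff of_nat_mult less_imp_le)
      have iq2: "- int q = - int d + (int p - 1) * (- int (lf p q))"
        using iq by (simp add: algebra_simps)
      have "(- int q) mod (int p - 1) = (- int d + (int p - 1) * (- int (lf p q))) mod (int p - 1)"
        by (subst iq2) (rule refl)
      also have "\<dots> = (- int d) mod (int p - 1)" by (rule mod_mult_self2)
      also have "\<dots> = (int p - 1 - int d + (int p - 1) * (-1)) mod (int p - 1)" by simp
      also have "\<dots> = (int p - 1 - int d) mod (int p - 1)" by (rule mod_mult_self2)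
      also have "\<dots> = int p - 1 - int d" using le r1 d1 p1 by (intro mod_pos_pos_trivial) auto
      finally have "(- int q) mod (int p - 1) = int p - 1 - int d" .
      then show False using assms(3) le p1 by linarith
    qed
    then show ?thesis using K s False d_def by simp
  qed
qed

end
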